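(* For any integers $x_1\ge x_2\ge1$ and any $n\ge0$, \[ p_n(x_1,x_2)\ge p_n(x_1+1,x_2-1),\qquad q_n(x_1,x_2)\ge q_n(x_1+1,x_2-1). \]
   Context: Here $p_k,q_k:\mathbf N^2\to\mathbf N$ ($\mathbf N$ the non-negative integers) are defined by the generating functions $\sum_{\mathbf x\in\mathbf N^2}\sum_{k\ge0}p_k(\mathbf x)t^{\mathbf x}u^k=\prod_{\mathbf x\in\mathbf N^2}(1-t^{\mathbf x}u)^{-1}$ and $\sum_{\mathbf x\in\mathbf N^2}\sum_{k\ge0}q_k(\mathbf x)t^{\mathbf x}u^k=\prod_{\mathbf x\in\mathbf N^2}(1+t^{\mathbf x}u)$, where $t^{(a,b)}=t_1^at_2^b$. Equivalently, $p_k(\mathbf x)$ is the number of vector partitions of $\mathbf x$ (unordered decompositions $\mathbf x=\mathbf x_1+\dots+\mathbf x_j$ with $\mathbf x_i\in\mathbf N^2\setminus\{\mathbf 0\}$) with at most $k$ parts, and $q_k(\mathbf x)$ is the number of vector partitions of $\mathbf x$ into exactly $k$ or $k-1$ distinct parts. *)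

theory Defs
  imports Main "HOL-Library.Multiset"
begin

text \<open>Vector partitions of a vector in N^2: unordered decompositions into
  nonzero parts, i.e. multisets of nonzero vectors whose componentwise sum is the vector.\<close>

definition vsum_mset :: "(nat \<times> nat) multiset \<Rightarrow> nat \<times> nat" where
  "vsum_mset M = (sum_mset (image_mset fst M), sum_mset (image_mset snd M))"

definition vsum_set :: "(nat \<times> nat) set \<Rightarrow> nat \<times> nat" where
  "vsum_set S = (\<Sum>v\<in>S. fst v, \<Sum>v\<in>S. snd v)"

definition p :: "nat \<Rightarrow> nat \<times> nat \<Rightarrow> nat" where
  "p k x = card {M. (0,0) \<notin># M \<and> vsum_mset M = x \<and> size M \<le> k}"

definition q :: "nat \<Rightarrow> nat \<times> nat \<Rightarrow> nat" where
  "q k x = card {S. finite S \<and> (0,0) \<notin> S \<and> vsum_set S = x \<and> (card S = k \<or> card S + 1 = k)}"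

end

theory Submission
  imports Defs Complex_Main "HOL-Library.Function_Algebras"
begin

lemma down_zero: "P (K::nat) \<Longrightarrow> (\<And>m. P (Suc m) \<Longrightarrow> P m) \<Longrightarrow> P 0"
  by (induction K) auto

lemma sl2_inj:
  fixes E F :: "('s \<Rightarrow> real) \<Rightarrow> ('s \<Rightarrow> real)" and wt deg :: "'s \<Rightarrow> int" and N h :: int
  assumes comm: "\<And>G s. E (F G) s - F (E G) s = of_int (wt s) * G s"
    and Elin: "\<And>G1 G2 c. E (\<lambda>s. G1 s + c * G2 s) = (\<lambda>s. E G1 s + c * E G2 s)"
    and Flin: "\<And>G1 G2 c. F (\<lambda>s. G1 s + c * G2 s) = (\<lambda>s. F G1 s + c * F G2 s)"
    and Esupp: "\<And>G h. (\<forall>s. G s \<noteq> 0 \<longrightarrow> wt s = h \<and> deg s = N) \<Longrightarrow>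
                 (\<forall>s. E G s \<noteq> 0 \<longrightarrow> wt s = h + 2 \<and> deg s = N)"
    and bound: "\<And>s. deg s = N \<Longrightarrow> wt s \<le> N"
    and hpos: "h > 0"
    and supp: "\<forall>s. G s \<noteq> 0 \<longrightarrow> wt s = h \<and> deg s = N"
    and FG: "F G = (\<lambda>_. 0)"
  shows "G = (\<lambda>_. 0)"
proof -
  have E0: "E (\<lambda>_. 0) = (\<lambda>_. 0)"
  proof -
    have "E (\<lambda>s. (\<lambda>_. 0) s + 1 * (\<lambda>_. 0) s) = (\<lambda>s. E (\<lambda>_. 0) s + 1 * E (\<lambda>_. 0) s)"
      by (rule Elin)
    then show ?thesis by (simp add: fun_eq_iff)
  qed
  have Esc: "E (\<lambda>s. c * G' s) = (\<lambda>s. c * E G' s)" for c G'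
  proof -
    have "E (\<lambda>s. (\<lambda>_. 0) s + c * G' s) = (\<lambda>s. E (\<lambda>_. 0) s + c * E G' s)"
      by (rule Elin)
    then show ?thesis using E0 by simp
  qed
  have suppk: "\<forall>s. (E^^k) G s \<noteq> 0 \<longrightarrow> wt s = h + 2 * int k \<and> deg s = N" for k
  proof (induction k)
    case 0 then show ?case using supp by simp
  next
    case (Suc k)
    from Esupp[OF Suc] show ?case by (simp add: algebra_simps)
  qed
  have wtk: "of_int (wt s) * (E^^k) G s = of_int (h + 2 * int k) * (E^^k) G s" for s k
    using suppk[of k] by (cases "(E^^k) G s = 0") auto
  have key: "F ((E^^(Suc k)) G) = (\<lambda>s. - (real (Suc k) * (of_int h + real k)) * (E^^k) G s)" for k
  proof (induction k)
    case 0
    have "F (E G) s = - (of_int h * G s)" for s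
      using comm[of G s] FG E0 supp by (cases "G s = 0") auto
    then show ?case by (simp add: fun_eq_iff)
  next
    case (Suc k)
    have "F ((E^^(Suc (Suc k))) G) s = E (F ((E^^(Suc k)) G)) s - of_int (wt s) * (E^^(Suc k)) G s" for s
      using comm[of "(E^^(Suc k)) G" s] by simp
    also have "... s = - (real (Suc k) * (of_int h + real k)) * (E^^(Suc k)) G s
        - of_int (h + 2 * int (Suc k)) * (E^^(Suc k)) G s" for s
      unfolding Suc wtk Esc by simp
    finally show ?case by (simp add: fun_eq_iff algebra_simps)
  qed
  define K where "K = Suc (nat N)"
  have "(E^^K) G = (\<lambda>_. 0)"
  proof (rule ext, rule ccontr)
    fix s assume "(E^^K) G s \<noteq> 0"
    with suppk[of K] have "wt s = h + 2 * int K" "deg s = N" by auto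
    moreover have "int K \<ge> N" unfolding K_def by simp
    moreover have "wt s \<le> N" using bound `deg s = N` by blast
    ultimately show False using hpos by linarith
  qed
  moreover have "(E^^(Suc m)) G = (\<lambda>_. 0) \<Longrightarrow> (E^^m) G = (\<lambda>_. 0)" for m
  proof -
    assume z: "(E^^(Suc m)) G = (\<lambda>_. 0)"
    have F0: "F (\<lambda>_. 0) = (\<lambda>_. 0)"
    proof -
      have "F (\<lambda>s. (\<lambda>_. 0) s + 1 * (\<lambda>_. 0) s) = (\<lambda>s. F (\<lambda>_. 0) s + 1 * F (\<lambda>_. 0) s)"
        by (rule Flin)
      then show ?thesis by (simp add: fun_eq_iff)
    qed
    have pos: "real (Suc m) * (of_int h + real m) > 0" using hpos by simp
    show ?thesis
    proof
      fix s
      have "0 = - (real (Suc m) * (of_int h + real m)) * (E^^m) G s"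
        using key[of m] z F0 by (metis (no_types, lifting))
      with pos show "(E^^m) G s = 0" by auto
    qed
  qed
  ultimately have "(E^^0) G = (\<lambda>_. 0)" by (rule down_zero[where P = "\<lambda>m. (E^^m) G = (\<lambda>_. 0)"])
  then show ?thesis by simp
qed


lemma vs_fun: "vector_space (\<lambda>(c::real) (f::'b \<Rightarrow> real) x. c * f x)"
  by unfold_locales (auto simp: fun_eq_iff algebra_simps)

lemma sum_fun_apply': "finite A \<Longrightarrow> (\<Sum>a\<in>A. (f a :: 'b \<Rightarrow> real)) x = (\<Sum>a\<in>A. f a x)"
  by (induction A rule: finite_induct) auto

lemma card_le_lin_inj:
  fixes L :: "('a \<Rightarrow> real) \<Rightarrow> ('b \<Rightarrow> real)"
  assumes finA: "finite A" and finB: "finite B"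
    and Llin: "\<And>G1 G2 c. L (\<lambda>s. G1 s + c * G2 s) = (\<lambda>s. L G1 s + c * L G2 s)"
    and maps: "\<And>G. (\<forall>s. s \<notin> A \<longrightarrow> G s = 0) \<Longrightarrow> (\<forall>s. s \<notin> B \<longrightarrow> L G s = 0)"
    and inj: "\<And>G. (\<forall>s. s \<notin> A \<longrightarrow> G s = 0) \<Longrightarrow> L G = (\<lambda>_. 0) \<Longrightarrow> G = (\<lambda>_. 0)"
  shows "card A \<le> card B"
proof -
  interpret vs: vector_space "\<lambda>(c::real) (f::'b \<Rightarrow> real) x. c * f x" by (rule vs_fun)
  define \<delta> :: "'a \<Rightarrow> 'a \<Rightarrow> real" where "\<delta> a = (\<lambda>x. if x = a then 1 else 0)" for a
  define \<delta>' :: "'b \<Rightarrow> 'b \<Rightarrow> real" where "\<delta>' b = (\<lambda>x. if x = b then 1 else 0)" for b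
  have L0: "L (\<lambda>_. 0) = (\<lambda>_. 0)"
  proof -
    have "L (\<lambda>s. (\<lambda>_. 0) s + 1 * (\<lambda>_. 0) s) = (\<lambda>s. L (\<lambda>_. 0) s + 1 * L (\<lambda>_. 0) s)"
      by (rule Llin)
    then show ?thesis by (simp add: fun_eq_iff)
  qed
  have Lsc: "L (\<lambda>s. c * G s) = (\<lambda>s. c * L G s)" for c G
    using Llin[of "\<lambda>_. 0" c G] L0 by simp
  have Lsum: "L (\<lambda>s. \<Sum>a\<in>S. c a * \<delta> a s) = (\<lambda>s. \<Sum>a\<in>S. c a * L (\<delta> a) s)" if "finite S" for S c
    using that
  proof (induction S rule: finite_induct)
    case empty then show ?case using L0 by simp
  next
    case (insert a S)
    have "L (\<lambda>s. \<Sum>a\<in>insert a S. c a * \<delta> a s) = L (\<lambda>s. (\<Sum>a\<in>S. c a * \<delta> a s) + c a * \<delta> a s)"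
      using insert by (simp add: add.commute)
    also have "\<dots> = (\<lambda>s. L (\<lambda>s. \<Sum>a\<in>S. c a * \<delta> a s) s + c a * L (\<delta> a) s)"
      by (rule Llin)
    finally show ?case using insert by (simp add: add.commute)
  qed
  define U where "U = (\<lambda>a. L (\<delta> a)) ` A"
  have injU: "inj_on (\<lambda>a. L (\<delta> a)) A"
  proof (rule inj_onI)
    fix a a' assume a: "a \<in> A" "a' \<in> A" "L (\<delta> a) = L (\<delta> a')"
    have "L (\<lambda>s. \<delta> a s + (-1) * \<delta> a' s) = (\<lambda>_. 0)"
      using Llin[of "\<delta> a" "-1" "\<delta> a'"] a(3) by (simp add: fun_eq_iff)
    then have "(\<lambda>s. \<delta> a s + (-1) * \<delta> a' s) = (\<lambda>_. 0)"
      by (rule inj[rotated]) (use a in \<open>auto simp: \<delta>_def\<close>)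
    then have "\<delta> a a + (-1) * \<delta> a' a = 0" by (metis)
    then show "a = a'" by (auto simp: \<delta>_def split: if_splits)
  qed
  have cardU: "card U = card A" unfolding U_def using injU by (simp add: card_image)
  have finU: "finite U" unfolding U_def using finA by simp
  have indep: "vs.independent U"
  proof (rule vs.independent_if_scalars_zero[OF finU])
    fix c v assume s: "(\<Sum>v\<in>U. (\<lambda>x. c v * v x)) = 0" and v: "v \<in> U"
    have "(\<Sum>v\<in>U. (\<lambda>x. c v * v x)) = (\<Sum>a\<in>A. (\<lambda>x. c (L (\<delta> a)) * L (\<delta> a) x))"
      unfolding U_def by (subst sum.reindex[OF injU]) simp
    also have "\<dots> = (\<lambda>x. \<Sum>a\<in>A. c (L (\<delta> a)) * L (\<delta> a) x)"
      using finA by (simp add: fun_eq_iff sum_fun_apply')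
    also have "\<dots> = L (\<lambda>s. \<Sum>a\<in>A. c (L (\<delta> a)) * \<delta> a s)"
      using Lsum[OF finA] by simp
    finally have "L (\<lambda>s. \<Sum>a\<in>A. c (L (\<delta> a)) * \<delta> a s) = (\<lambda>_. 0)"
      using s by (simp add: zero_fun_def)
    then have z: "(\<lambda>s. \<Sum>a\<in>A. c (L (\<delta> a)) * \<delta> a s) = (\<lambda>_. 0)"
      by (rule inj[rotated]) (auto simp: \<delta>_def intro!: sum.neutral)
    from v obtain a where a: "a \<in> A" "v = L (\<delta> a)" unfolding U_def by auto
    have "(\<Sum>a'\<in>A. c (L (\<delta> a')) * \<delta> a' a) = c (L (\<delta> a))"
    proof -
      have "(\<Sum>a'\<in>A. c (L (\<delta> a')) * \<delta> a' a) = (\<Sum>a'\<in>A. if a = a' then c (L (\<delta> a')) else 0)"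
        by (rule sum.cong) (auto simp: \<delta>_def)
      then show ?thesis using finA a(1) by simp
    qed
    then show "c v = 0" using z a by (metis)
  qed
  have spanU: "U \<subseteq> vs.span (\<delta>' ` B)"
  proof
    fix v assume "v \<in> U"
    then obtain a where a: "a \<in> A" "v = L (\<delta> a)" unfolding U_def by auto
    have supv: "\<forall>s. s \<notin> B \<longrightarrow> v s = 0"
      unfolding a(2) by (rule maps) (auto simp: \<delta>_def a(1))
    have "v = (\<Sum>b\<in>B. (\<lambda>x. v b * \<delta>' b x))"
    proof
      fix x
      have "(\<Sum>b\<in>B. (\<lambda>x. v b * \<delta>' b x)) x = (\<Sum>b\<in>B. if x = b then v b else 0)"
        unfolding sum_fun_apply'[OF finB] by (rule sum.cong) (auto simp: \<delta>'_def)
      then show "v x = (\<Sum>b\<in>B. (\<lambda>x. v b * \<delta>' b x)) x"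
        using finB supv by auto
    qed
    also have "\<dots> \<in> vs.span (\<delta>' ` B)"
      by (intro vs.span_sum vs.span_scale vs.span_base) auto
    finally show "v \<in> vs.span (\<delta>' ` B)" .
  qed
  have "card A = card U" using cardU by simp
  also have "\<dots> = vs.dim U" using vs.dim_eq_card_independent[OF indep] by simp
  also have "\<dots> \<le> card (\<delta>' ` B)" by (rule vs.dim_le_card) (use spanU finB in auto)
  also have "\<dots> \<le> card B" using finB by (rule card_image_le)
  finally show ?thesis .
qed

definition rr :: "nat \<times> nat \<Rightarrow> nat \<times> nat" where "rr v = (fst v + 1, snd v - 1)"
definition ll :: "nat \<times> nat \<Rightarrow> nat \<times> nat" where "ll v = (fst v - 1, snd v + 1)"

definition FP :: "((nat \<times> nat) multiset \<Rightarrow> real) \<Rightarrow> (nat \<times> nat) multiset \<Rightarrow> real" where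
  "FP G M = (\<Sum>v\<in>#M. if 1 \<le> snd v then real (fst v + 1) * G (add_mset (rr v) (M - {#v#})) else 0)"
definition EP :: "((nat \<times> nat) multiset \<Rightarrow> real) \<Rightarrow> (nat \<times> nat) multiset \<Rightarrow> real" where
  "EP G M = (\<Sum>v\<in>#M. if 1 \<le> fst v then real (snd v + 1) * G (add_mset (ll v) (M - {#v#})) else 0)"

lemma sum_mset_minus1:
  fixes g :: "'a \<Rightarrow> real"
  assumes "u \<in># M" shows "(\<Sum>w\<in>#M - {#u#}. g w) = (\<Sum>w\<in>#M. g w) - g u"
proof -
  have "(\<Sum>w\<in>#M. g w) = (\<Sum>w\<in>#add_mset u (M - {#u#}). g w)" using assms by simp
  also have "\<dots> = g u + (\<Sum>w\<in>#M - {#u#}. g w)" by simp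
  finally show ?thesis by simp
qed

lemma sum_mset_cong':
  "(\<And>x. x \<in># M \<Longrightarrow> f x = g x) \<Longrightarrow> (\<Sum>x\<in>#M. f x) = (\<Sum>x\<in>#M. g x)"
  by (metis image_mset_cong)

lemma sum_mset_diff_distrib:
  fixes f g :: "'a \<Rightarrow> real"
  shows "(\<Sum>x\<in>#M. f x - g x) = (\<Sum>x\<in>#M. f x) - (\<Sum>x\<in>#M. g x)"
  by (induction M) auto

lemma offdiag_swap:
  fixes \<Phi> :: "'a \<Rightarrow> 'a \<Rightarrow> real"
  shows "(\<Sum>u\<in>#M. \<Sum>w\<in>#M - {#u#}. \<Phi> u w) = (\<Sum>w\<in>#M. \<Sum>u\<in>#M - {#w#}. \<Phi> u w)"
proof -
  have "(\<Sum>u\<in>#M. \<Sum>w\<in>#M - {#u#}. \<Phi> u w) = (\<Sum>u\<in>#M. (\<Sum>w\<in>#M. \<Phi> u w) - \<Phi> u u)"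
    by (rule sum_mset_cong') (rule sum_mset_minus1)
  also have "\<dots> = (\<Sum>u\<in>#M. \<Sum>w\<in>#M. \<Phi> u w) - (\<Sum>u\<in>#M. \<Phi> u u)"
    by (simp add: sum_mset_diff_distrib)
  also have "(\<Sum>u\<in>#M. \<Sum>w\<in>#M. \<Phi> u w) = (\<Sum>w\<in>#M. \<Sum>u\<in>#M. \<Phi> u w)"
    by (rule sum_mset.swap)
  also have "(\<Sum>w\<in>#M. \<Sum>u\<in>#M. \<Phi> u w) - (\<Sum>u\<in>#M. \<Phi> u u) = (\<Sum>w\<in>#M. (\<Sum>u\<in>#M. \<Phi> u w) - \<Phi> w w)"
    by (simp add: sum_mset_diff_distrib)
  also have "\<dots> = (\<Sum>w\<in>#M. \<Sum>u\<in>#M - {#w#}. \<Phi> u w)"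
    by (rule sum_mset_cong') (rule sum_mset_minus1[symmetric])
  finally show ?thesis .
qed

lemma rr_ll: "1 \<le> fst u \<Longrightarrow> rr (ll u) = u" by (cases u) (auto simp: rr_def ll_def)
lemma ll_rr: "1 \<le> snd u \<Longrightarrow> ll (rr u) = u" by (cases u) (auto simp: rr_def ll_def)

lemma diag_auxP: "(\<Sum>u\<in>#M. real (snd u + 1) * real (fst u) * c) - (\<Sum>w\<in>#M. real (fst w + 1) * real (snd w) * c)
   = (real (fst (vsum_mset M)) - real (snd (vsum_mset M))) * c"
  by (induction M) (auto simp: vsum_mset_def algebra_simps)

lemma commP:
  "EP (FP G) M - FP (EP G) M = (real (fst (vsum_mset M)) - real (snd (vsum_mset M))) * G M"
proof -
  define \<Phi> where "\<Phi> u w = (if 1 \<le> fst u then real (snd u + 1) else 0) *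
     ((if 1 \<le> snd w then real (fst w + 1) else 0) *
      G (add_mset (rr w) (add_mset (ll u) (M - {#u#} - {#w#}))))" for u w
  have EF: "EP (FP G) M = (\<Sum>u\<in>#M. real (snd u + 1) * real (fst u) * G M) + (\<Sum>u\<in>#M. \<Sum>w\<in>#M - {#u#}. \<Phi> u w)"
  proof -
    have "EP (FP G) M = (\<Sum>u\<in>#M. real (snd u + 1) * real (fst u) * G M + (\<Sum>w\<in>#M - {#u#}. \<Phi> u w))"
      unfolding EP_def
    proof (rule sum_mset_cong')
      fix u assume u: "u \<in># M"
      show "(if 1 \<le> fst u then real (snd u + 1) * FP G (add_mset (ll u) (M - {#u#})) else 0) =
        real (snd u + 1) * real (fst u) * G M + (\<Sum>w\<in>#M - {#u#}. \<Phi> u w)"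
      proof (cases "1 \<le> fst u")
        case False
        then show ?thesis by (simp add: \<Phi>_def)
      next
        case True
        have "FP G (add_mset (ll u) (M - {#u#})) = real (fst u) * G M +
          (\<Sum>w\<in>#M - {#u#}. (if 1 \<le> snd w then real (fst w + 1) else 0) *
             G (add_mset (rr w) (add_mset (ll u) (M - {#u#} - {#w#}))))"
        proof -
          have h1: "(if 1 \<le> snd (ll u) then real (fst (ll u) + 1) * G (add_mset (rr (ll u)) (add_mset (ll u) (M - {#u#}) - {#ll u#})) else 0)
             = real (fst u) * G M"
            using True u by (simp add: rr_ll) (simp add: ll_def)
          have h2: "(\<Sum>w\<in>#M - {#u#}. if 1 \<le> snd w then real (fst w + 1) * G (add_mset (rr w) (add_mset (ll u) (M - {#u#}) - {#w#})) else 0)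
            = (\<Sum>w\<in>#M - {#u#}. (if 1 \<le> snd w then real (fst w + 1) else 0) *
             G (add_mset (rr w) (add_mset (ll u) (M - {#u#} - {#w#}))))"
            by (rule sum_mset_cong') simp
          show ?thesis unfolding FP_def using h1 h2 by simp
        qed
        then show ?thesis using True
          by (simp add: \<Phi>_def sum_mset_distrib_left algebra_simps)
      qed
    qed
    then show ?thesis by (simp add: sum_mset.distrib)
  qed
  have FE: "FP (EP G) M = (\<Sum>w\<in>#M. real (fst w + 1) * real (snd w) * G M) + (\<Sum>w\<in>#M. \<Sum>u\<in>#M - {#w#}. \<Phi> u w)"
  proof -
    have "FP (EP G) M = (\<Sum>w\<in>#M. real (fst w + 1) * real (snd w) * G M + (\<Sum>u\<in>#M - {#w#}. \<Phi> u w))"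
      unfolding FP_def
    proof (rule sum_mset_cong')
      fix w assume w: "w \<in># M"
      show "(if 1 \<le> snd w then real (fst w + 1) * EP G (add_mset (rr w) (M - {#w#})) else 0) =
        real (fst w + 1) * real (snd w) * G M + (\<Sum>u\<in>#M - {#w#}. \<Phi> u w)"
      proof (cases "1 \<le> snd w")
        case False
        then show ?thesis by (simp add: \<Phi>_def)
      next
        case True
        have "EP G (add_mset (rr w) (M - {#w#})) = real (snd w) * G M +
          (\<Sum>u\<in>#M - {#w#}. (if 1 \<le> fst u then real (snd u + 1) else 0) *
             G (add_mset (rr w) (add_mset (ll u) (M - {#u#} - {#w#}))))"
        proof -
          have h1: "(if 1 \<le> fst (rr w) then real (snd (rr w) + 1) * G (add_mset (ll (rr w)) (add_mset (rr w) (M - {#w#}) - {#rr w#})) else 0)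
             = real (snd w) * G M"
            using True w by (simp add: ll_rr) (simp add: rr_def)
          have h2: "(\<Sum>u\<in>#M - {#w#}. if 1 \<le> fst u then real (snd u + 1) * G (add_mset (ll u) (add_mset (rr w) (M - {#w#}) - {#u#})) else 0)
            = (\<Sum>u\<in>#M - {#w#}. (if 1 \<le> fst u then real (snd u + 1) else 0) *
             G (add_mset (rr w) (add_mset (ll u) (M - {#u#} - {#w#}))))"
          proof (rule sum_mset_cong')
            fix u assume "u \<in># M - {#w#}"
            then have eq: "add_mset (ll u) (add_mset (rr w) (M - {#w#}) - {#u#}) = add_mset (rr w) (add_mset (ll u) (M - {#u#} - {#w#}))"
              by (simp add: diff_right_commute add_mset_commute)
            then show "(if 1 \<le> fst u then real (snd u + 1) * G (add_mset (ll u) (add_mset (rr w) (M - {#w#}) - {#u#})) else 0) =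
              (if 1 \<le> fst u then real (snd u + 1) else 0) * G (add_mset (rr w) (add_mset (ll u) (M - {#u#} - {#w#})))"
              by (simp only: eq) simp
          qed
          show ?thesis unfolding EP_def using h1 h2 by simp
        qed
        then show ?thesis using True
          by (simp add: \<Phi>_def sum_mset_distrib_left algebra_simps)
      qed
    qed
    then show ?thesis by (simp add: sum_mset.distrib)
  qed
  have diag: "(\<Sum>u\<in>#M. real (snd u + 1) * real (fst u) * G M) - (\<Sum>w\<in>#M. real (fst w + 1) * real (snd w) * G M)
     = (real (fst (vsum_mset M)) - real (snd (vsum_mset M))) * G M"
    by (rule diag_auxP)
  show ?thesis using EF FE diag offdiag_swap[of \<Phi> M] by simp
qed


definition FQ :: "((nat \<times> nat) set \<Rightarrow> real) \<Rightarrow> (nat \<times> nat) set \<Rightarrow> real" where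
  "FQ G S = (\<Sum>v\<in>S. if 1 \<le> snd v \<and> rr v \<notin> S then real (fst v + 1) * G (insert (rr v) (S - {v})) else 0)"
definition EQ :: "((nat \<times> nat) set \<Rightarrow> real) \<Rightarrow> (nat \<times> nat) set \<Rightarrow> real" where
  "EQ G S = (\<Sum>v\<in>S. if 1 \<le> fst v \<and> ll v \<notin> S then real (snd v + 1) * G (insert (ll v) (S - {v})) else 0)"

lemma ll_neq: "1 \<le> fst u \<Longrightarrow> ll u \<noteq> u" by (cases u) (auto simp: ll_def)
lemma rr_neq: "rr u \<noteq> u" by (cases u) (auto simp: rr_def)

lemma offdiag_swap_set:
  fixes \<Phi> :: "'a \<Rightarrow> 'a \<Rightarrow> real"
  assumes "finite S"
  shows "(\<Sum>u\<in>S. \<Sum>w\<in>S - {u}. \<Phi> u w) = (\<Sum>w\<in>S. \<Sum>u\<in>S - {w}. \<Phi> u w)"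
proof -
  have "(\<Sum>u\<in>S. \<Sum>w\<in>S - {u}. \<Phi> u w) = (\<Sum>u\<in>S. (\<Sum>w\<in>S. \<Phi> u w) - \<Phi> u u)"
    using assms by (intro sum.cong) (auto simp: sum_diff1)
  also have "\<dots> = (\<Sum>u\<in>S. \<Sum>w\<in>S. \<Phi> u w) - (\<Sum>u\<in>S. \<Phi> u u)"
    by (simp add: sum_subtractf)
  also have "(\<Sum>u\<in>S. \<Sum>w\<in>S. \<Phi> u w) = (\<Sum>w\<in>S. \<Sum>u\<in>S. \<Phi> u w)"
    by (rule sum.swap)
  also have "(\<Sum>w\<in>S. \<Sum>u\<in>S. \<Phi> u w) - (\<Sum>u\<in>S. \<Phi> u u) = (\<Sum>w\<in>S. (\<Sum>u\<in>S. \<Phi> u w) - \<Phi> w w)"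
    by (simp add: sum_subtractf)
  also have "\<dots> = (\<Sum>w\<in>S. \<Sum>u\<in>S - {w}. \<Phi> u w)"
    using assms by (intro sum.cong) (auto simp: sum_diff1)
  finally show ?thesis .
qed

lemma diag_auxQ:
  assumes S: "finite S"
  shows "(\<Sum>u\<in>S. if 1 \<le> fst u \<and> ll u \<notin> S then real (snd u + 1) * real (fst u) * c else 0)
       - (\<Sum>w\<in>S. if 1 \<le> snd w \<and> rr w \<notin> S then real (fst w + 1) * real (snd w) * c else 0)
     = (real (fst (vsum_set S)) - real (snd (vsum_set S))) * c"
proof -
  define \<alpha> where "\<alpha> u = real (snd u + 1) * real (fst u) * c" for u :: "nat \<times> nat"
  define \<beta> where "\<beta> u = real (fst u + 1) * real (snd u) * c" for u :: "nat \<times> nat"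
  define PA where "PA = {u\<in>S. 1 \<le> fst u \<and> ll u \<in> S}"
  define PB where "PB = {w\<in>S. 1 \<le> snd w \<and> rr w \<in> S}"
  have A: "(\<Sum>u\<in>S. \<alpha> u) = (\<Sum>u\<in>S. if 1 \<le> fst u \<and> ll u \<notin> S then \<alpha> u else 0) + (\<Sum>u\<in>PA. \<alpha> u)"
    unfolding PA_def sum.inter_filter[OF S] sum.distrib[symmetric]
    by (intro sum.cong) (auto simp: \<alpha>_def)
  have B: "(\<Sum>u\<in>S. \<beta> u) = (\<Sum>u\<in>S. if 1 \<le> snd u \<and> rr u \<notin> S then \<beta> u else 0) + (\<Sum>u\<in>PB. \<beta> u)"
    unfolding PB_def sum.inter_filter[OF S] sum.distrib[symmetric]
    by (intro sum.cong) (auto simp: \<beta>_def)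
  have AB: "(\<Sum>u\<in>PA. \<alpha> u) = (\<Sum>u\<in>PB. \<beta> u)"
    by (rule sum.reindex_bij_witness[where i = rr and j = ll])
       (auto simp: PA_def PB_def rr_def ll_def \<alpha>_def \<beta>_def)
  have "(\<Sum>u\<in>S. \<alpha> u) - (\<Sum>u\<in>S. \<beta> u) = (real (fst (vsum_set S)) - real (snd (vsum_set S))) * c"
  proof -
    have "(\<Sum>u\<in>S. \<alpha> u) - (\<Sum>u\<in>S. \<beta> u) = (\<Sum>u\<in>S. (real (fst u) - real (snd u)) * c)"
      by (simp add: \<alpha>_def \<beta>_def sum_subtractf[symmetric] algebra_simps)
    also have "\<dots> = (\<Sum>u\<in>S. real (fst u) - real (snd u)) * c" by (simp add: sum_distrib_right)
    finally show ?thesis by (simp add: vsum_set_def sum_subtractf)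
  qed
  then show ?thesis using A B AB unfolding \<alpha>_def \<beta>_def by simp
qed

lemma commQ:
  "EQ (FQ G) S - FQ (EQ G) S = (real (fst (vsum_set S)) - real (snd (vsum_set S))) * G S"
proof (cases "finite S")
  case False
  then show ?thesis by (simp add: EQ_def FQ_def vsum_set_def)
next
  case fin: True
  define \<Phi> where "\<Phi> u w = (if 1 \<le> fst u \<and> ll u \<notin> S then real (snd u + 1) else 0) *
     ((if 1 \<le> snd w \<and> rr w \<notin> S \<and> rr w \<noteq> ll u then real (fst w + 1) else 0) *
      G (insert (rr w) (insert (ll u) (S - {u} - {w}))))" for u w
  have EF: "EQ (FQ G) S = (\<Sum>u\<in>S. if 1 \<le> fst u \<and> ll u \<notin> S then real (snd u + 1) * real (fst u) * G S else 0)
      + (\<Sum>u\<in>S. \<Sum>w\<in>S - {u}. \<Phi> u w)"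
  proof -
    have "EQ (FQ G) S = (\<Sum>u\<in>S. (if 1 \<le> fst u \<and> ll u \<notin> S then real (snd u + 1) * real (fst u) * G S else 0)
       + (\<Sum>w\<in>S - {u}. \<Phi> u w))"
      unfolding EQ_def
    proof (rule sum.cong[OF refl])
      fix u assume u: "u \<in> S"
      show "(if 1 \<le> fst u \<and> ll u \<notin> S then real (snd u + 1) * FQ G (insert (ll u) (S - {u})) else 0) =
        (if 1 \<le> fst u \<and> ll u \<notin> S then real (snd u + 1) * real (fst u) * G S else 0) + (\<Sum>w\<in>S - {u}. \<Phi> u w)"
      proof (cases "1 \<le> fst u \<and> ll u \<notin> S")
        case False
        then show ?thesis by (auto simp: \<Phi>_def)
      next
        case True
        let ?S1 = "insert (ll u) (S - {u})"
        have nin: "ll u \<notin> S - {u}" using True by auto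
        have h1: "(if 1 \<le> snd (ll u) \<and> rr (ll u) \<notin> ?S1 then real (fst (ll u) + 1) * G (insert (rr (ll u)) (?S1 - {ll u})) else 0)
             = real (fst u) * G S"
        proof -
          have "rr (ll u) = u" using True by (simp add: rr_ll)
          moreover have "u \<noteq> ll u" using ll_neq[of u] True by auto
          moreover have "?S1 - {ll u} = S - {u}" using nin by auto
          moreover have "insert u (S - {u}) = S" using u by auto
          ultimately show ?thesis using True by (auto simp: ll_def)
        qed
        have h2: "(\<Sum>w\<in>S - {u}. if 1 \<le> snd w \<and> rr w \<notin> ?S1 then real (fst w + 1) * G (insert (rr w) (?S1 - {w})) else 0)
          = (\<Sum>w\<in>S - {u}. (if 1 \<le> snd w \<and> rr w \<notin> S \<and> rr w \<noteq> ll u then real (fst w + 1) else 0) *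
             G (insert (rr w) (insert (ll u) (S - {u} - {w}))))"
        proof (rule sum.cong[OF refl])
          fix w assume w: "w \<in> S - {u}"
          have c: "(1 \<le> snd w \<and> rr w \<notin> ?S1) = (1 \<le> snd w \<and> rr w \<notin> S \<and> rr w \<noteq> ll u)"
          proof -
            have "1 \<le> snd w \<Longrightarrow> rr w \<noteq> u"
            proof
              assume "1 \<le> snd w" "rr w = u"
              then have "w = ll u" using ll_rr[of w] by simp
              with w True show False by auto
            qed
            then show ?thesis by auto
          qed
          have "w \<noteq> ll u" using w True by auto
          then have "?S1 - {w} = insert (ll u) (S - {u} - {w})" by auto
          then show "(if 1 \<le> snd w \<and> rr w \<notin> ?S1 then real (fst w + 1) * G (insert (rr w) (?S1 - {w})) else 0) =
            (if 1 \<le> snd w \<and> rr w \<notin> S \<and> rr w \<noteq> ll u then real (fst w + 1) else 0) *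
             G (insert (rr w) (insert (ll u) (S - {u} - {w})))"
            using c by simp
        qed
        have "FQ G ?S1 = real (fst u) * G S +
           (\<Sum>w\<in>S - {u}. (if 1 \<le> snd w \<and> rr w \<notin> S \<and> rr w \<noteq> ll u then real (fst w + 1) else 0) *
             G (insert (rr w) (insert (ll u) (S - {u} - {w}))))"
          unfolding FQ_def using fin nin h1 h2 by (simp add: sum.insert)
        then show ?thesis using True
          by (simp add: \<Phi>_def sum_distrib_left algebra_simps)
      qed
    qed
    then show ?thesis by (simp add: sum.distrib)
  qed
  have FE: "FQ (EQ G) S = (\<Sum>w\<in>S. if 1 \<le> snd w \<and> rr w \<notin> S then real (fst w + 1) * real (snd w) * G S else 0)
      + (\<Sum>w\<in>S. \<Sum>u\<in>S - {w}. \<Phi> u w)"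
  proof -
    have "FQ (EQ G) S = (\<Sum>w\<in>S. (if 1 \<le> snd w \<and> rr w \<notin> S then real (fst w + 1) * real (snd w) * G S else 0)
       + (\<Sum>u\<in>S - {w}. \<Phi> u w))"
      unfolding FQ_def
    proof (rule sum.cong[OF refl])
      fix w assume w: "w \<in> S"
      show "(if 1 \<le> snd w \<and> rr w \<notin> S then real (fst w + 1) * EQ G (insert (rr w) (S - {w})) else 0) =
        (if 1 \<le> snd w \<and> rr w \<notin> S then real (fst w + 1) * real (snd w) * G S else 0) + (\<Sum>u\<in>S - {w}. \<Phi> u w)"
      proof (cases "1 \<le> snd w \<and> rr w \<notin> S")
        case False
        then show ?thesis by (auto simp: \<Phi>_def)
      next
        case True
        let ?S2 = "insert (rr w) (S - {w})"
        have nin: "rr w \<notin> S - {w}" using True by auto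
        have h1: "(if 1 \<le> fst (rr w) \<and> ll (rr w) \<notin> ?S2 then real (snd (rr w) + 1) * G (insert (ll (rr w)) (?S2 - {rr w})) else 0)
             = real (snd w) * G S"
        proof -
          have "ll (rr w) = w" using True by (simp add: ll_rr)
          moreover have "w \<noteq> rr w" using rr_neq[of w] by auto
          moreover have "?S2 - {rr w} = S - {w}" using nin by auto
          moreover have "insert w (S - {w}) = S" using w by auto
          ultimately show ?thesis using True by (auto simp: rr_def)
        qed
        have h2: "(\<Sum>u\<in>S - {w}. if 1 \<le> fst u \<and> ll u \<notin> ?S2 then real (snd u + 1) * G (insert (ll u) (?S2 - {u})) else 0)
          = (\<Sum>u\<in>S - {w}. (if 1 \<le> fst u \<and> ll u \<notin> S \<and> rr w \<noteq> ll u then real (snd u + 1) else 0) *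
             G (insert (rr w) (insert (ll u) (S - {u} - {w}))))"
        proof (rule sum.cong[OF refl])
          fix u assume u: "u \<in> S - {w}"
          have c: "(1 \<le> fst u \<and> ll u \<notin> ?S2) = (1 \<le> fst u \<and> ll u \<notin> S \<and> rr w \<noteq> ll u)"
          proof -
            have "1 \<le> fst u \<Longrightarrow> ll u \<noteq> w"
            proof
              assume "1 \<le> fst u" "ll u = w"
              then have "u = rr w" using rr_ll[of u] by simp
              with u True show False by auto
            qed
            then show ?thesis by auto
          qed
          have "u \<noteq> rr w" using u True by auto
          then have "insert (ll u) (?S2 - {u}) = insert (rr w) (insert (ll u) (S - {u} - {w}))" by auto
          then show "(if 1 \<le> fst u \<and> ll u \<notin> ?S2 then real (snd u + 1) * G (insert (ll u) (?S2 - {u})) else 0) =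
            (if 1 \<le> fst u \<and> ll u \<notin> S \<and> rr w \<noteq> ll u then real (snd u + 1) else 0) *
             G (insert (rr w) (insert (ll u) (S - {u} - {w})))"
            using c by simp
        qed
        have "EQ G ?S2 = real (snd w) * G S +
           (\<Sum>u\<in>S - {w}. (if 1 \<le> fst u \<and> ll u \<notin> S \<and> rr w \<noteq> ll u then real (snd u + 1) else 0) *
             G (insert (rr w) (insert (ll u) (S - {u} - {w}))))"
          unfolding EQ_def using fin nin h1 h2 by (simp add: sum.insert)
        moreover have "(\<Sum>u\<in>S - {w}. \<Phi> u w) = real (fst w + 1) *
           (\<Sum>u\<in>S - {w}. (if 1 \<le> fst u \<and> ll u \<notin> S \<and> rr w \<noteq> ll u then real (snd u + 1) else 0) *
             G (insert (rr w) (insert (ll u) (S - {u} - {w}))))"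
          unfolding sum_distrib_left by (rule sum.cong) (use True in \<open>auto simp: \<Phi>_def\<close>)
        ultimately show ?thesis using True by (simp add: algebra_simps)
      qed
    qed
    then show ?thesis by (simp add: sum.distrib)
  qed
  show ?thesis using EF FE diag_auxQ[OF fin, of "G S"] offdiag_swap_set[OF fin, of \<Phi>]
    by (simp add: mult.assoc)
qed

lemma FP_lin: "FP (\<lambda>s. G1 s + c * G2 s) = (\<lambda>s. FP G1 s + c * FP G2 s)"
proof
  fix M
  show "FP (\<lambda>s. G1 s + c * G2 s) M = FP G1 M + c * FP G2 M"
    unfolding FP_def sum_mset_distrib_left sum_mset.distrib[symmetric]
    by (rule sum_mset_cong') (simp add: algebra_simps)
qed

lemma EP_lin: "EP (\<lambda>s. G1 s + c * G2 s) = (\<lambda>s. EP G1 s + c * EP G2 s)"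
proof
  fix M
  show "EP (\<lambda>s. G1 s + c * G2 s) M = EP G1 M + c * EP G2 M"
    unfolding EP_def sum_mset_distrib_left sum_mset.distrib[symmetric]
    by (rule sum_mset_cong') (simp add: algebra_simps)
qed

lemma FQ_lin: "FQ (\<lambda>s. G1 s + c * G2 s) = (\<lambda>s. FQ G1 s + c * FQ G2 s)"
proof
  fix S
  show "FQ (\<lambda>s. G1 s + c * G2 s) S = FQ G1 S + c * FQ G2 S"
    unfolding FQ_def sum_distrib_left sum.distrib[symmetric]
    by (rule sum.cong) (simp_all add: algebra_simps)
qed

lemma EQ_lin: "EQ (\<lambda>s. G1 s + c * G2 s) = (\<lambda>s. EQ G1 s + c * EQ G2 s)"
proof
  fix S
  show "EQ (\<lambda>s. G1 s + c * G2 s) S = EQ G1 S + c * EQ G2 S"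
    unfolding EQ_def sum_distrib_left sum.distrib[symmetric]
    by (rule sum.cong) (simp_all add: algebra_simps)
qed

lemma sum_mset_nonzero:
  fixes f :: "'a \<Rightarrow> real"
  assumes "(\<Sum>v\<in>#M. f v) \<noteq> 0" shows "\<exists>v. v \<in># M \<and> f v \<noteq> 0"
proof (rule ccontr)
  assume "\<not> ?thesis"
  then have "(\<Sum>v\<in>#M. f v) = (\<Sum>v\<in>#M. 0)" by (intro sum_mset_cong') auto
  with assms show False by simp
qed

lemma vsum_move:
  assumes "v \<in># M"
  shows "fst (vsum_mset (add_mset w (M - {#v#}))) + fst v = fst (vsum_mset M) + fst w"
    and "snd (vsum_mset (add_mset w (M - {#v#}))) + snd v = snd (vsum_mset M) + snd w"
proof -
  have M: "M = add_mset v (M - {#v#})" using assms by simp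
  show "fst (vsum_mset (add_mset w (M - {#v#}))) + fst v = fst (vsum_mset M) + fst w"
    by (subst (2) M) (simp add: vsum_mset_def)
  show "snd (vsum_mset (add_mset w (M - {#v#}))) + snd v = snd (vsum_mset M) + snd w"
    by (subst (2) M) (simp add: vsum_mset_def)
qed

lemma vsum_set_move:
  assumes "finite S" "v \<in> S" "w \<notin> S - {v}"
  shows "fst (vsum_set (insert w (S - {v}))) + fst v = fst (vsum_set S) + fst w"
    and "snd (vsum_set (insert w (S - {v}))) + snd v = snd (vsum_set S) + snd w"
  using assms by (simp_all add: vsum_set_def sum.remove)

definition wtP :: "(nat \<times> nat) multiset \<Rightarrow> int" where
  "wtP M = int (fst (vsum_mset M)) - int (snd (vsum_mset M))"
definition degP :: "(nat \<times> nat) multiset \<Rightarrow> int" where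
  "degP M = int (fst (vsum_mset M)) + int (snd (vsum_mset M))"
definition wtQ :: "(nat \<times> nat) set \<Rightarrow> int" where
  "wtQ S = int (fst (vsum_set S)) - int (snd (vsum_set S))"
definition degQ :: "(nat \<times> nat) set \<Rightarrow> int" where
  "degQ S = int (fst (vsum_set S)) + int (snd (vsum_set S))"

lemma EP_supp:
  assumes "\<forall>s. G s \<noteq> 0 \<longrightarrow> wtP s = h \<and> degP s = N"
  shows "\<forall>s. EP G s \<noteq> 0 \<longrightarrow> wtP s = h + 2 \<and> degP s = N"
proof (intro allI impI)
  fix M assume "EP G M \<noteq> 0"
  then obtain u where u: "u \<in># M" and nz: "(if 1 \<le> fst u then real (snd u + 1) * G (add_mset (ll u) (M - {#u#})) else 0) \<noteq> 0"
    unfolding EP_def using sum_mset_nonzero by blast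
  then have f: "1 \<le> fst u" and G: "G (add_mset (ll u) (M - {#u#})) \<noteq> 0" by (auto split: if_splits)
  with assms have w: "wtP (add_mset (ll u) (M - {#u#})) = h" "degP (add_mset (ll u) (M - {#u#})) = N" by auto
  from vsum_move[OF u, of "ll u"] f show "wtP M = h + 2 \<and> degP M = N"
    using w by (auto simp: wtP_def degP_def ll_def)
qed

lemma EQ_supp:
  assumes "\<forall>s. G s \<noteq> 0 \<longrightarrow> wtQ s = h \<and> degQ s = N"
  shows "\<forall>s. EQ G s \<noteq> 0 \<longrightarrow> wtQ s = h + 2 \<and> degQ s = N"
proof (intro allI impI)
  fix S assume nz0: "EQ G S \<noteq> 0"
  then have fin: "finite S" unfolding EQ_def using sum.infinite by blast
  from nz0 obtain u where u: "u \<in> S" and nz: "(if 1 \<le> fst u \<and> ll u \<notin> S then real (snd u + 1) * G (insert (ll u) (S - {u})) else 0) \<noteq> 0"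
    using sum.not_neutral_contains_not_neutral[OF nz0[unfolded EQ_def]] by blast
  then have f: "1 \<le> fst u" "ll u \<notin> S" and G: "G (insert (ll u) (S - {u})) \<noteq> 0" by (auto split: if_splits)
  with assms have w: "wtQ (insert (ll u) (S - {u})) = h" "degQ (insert (ll u) (S - {u})) = N" by auto
  from vsum_set_move[OF fin u, of "ll u"] f show "wtQ S = h + 2 \<and> degQ S = N"
    using w by (auto simp: wtQ_def degQ_def ll_def)
qed

lemma mem_le_vsum: "v \<in># M \<Longrightarrow> fst v \<le> fst (vsum_mset M) \<and> snd v \<le> snd (vsum_mset M)"
proof -
  assume "v \<in># M"
  then have M: "M = add_mset v (M - {#v#})" by simp
  show ?thesis by (subst (1 2) M) (simp add: vsum_mset_def)
qed

lemma finite_Pset: "finite {M. (0,0) \<notin># M \<and> vsum_mset M = x \<and> size M \<le> k}"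
proof (rule finite_subset)
  let ?X = "{0..fst x} \<times> {0..snd x}"
  show "{M. (0,0) \<notin># M \<and> vsum_mset M = x \<and> size M \<le> k} \<subseteq> (\<Union>j\<in>{..k}. multisets_of_size ?X j)"
    using mem_le_vsum by (fastforce simp: multisets_of_size_def)
  show "finite (\<Union>j\<in>{..k}. multisets_of_size ?X j)" by auto
qed

lemma finite_Qset: "finite {S. finite S \<and> (0,0) \<notin> S \<and> vsum_set S = x \<and> (card S = k \<or> card S + 1 = k)}"
proof (rule finite_subset)
  let ?X = "{0..fst x} \<times> {0..snd x}"
  show "{S. finite S \<and> (0,0) \<notin> S \<and> vsum_set S = x \<and> (card S = k \<or> card S + 1 = k)} \<subseteq> Pow ?X"
  proof
    fix S assume "S \<in> {S. finite S \<and> (0,0) \<notin> S \<and> vsum_set S = x \<and> (card S = k \<or> card S + 1 = k)}"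
    then have S: "finite S" "vsum_set S = x" by auto
    show "S \<in> Pow ?X"
    proof (simp only: Pow_iff, rule subsetI)
      fix v assume v: "v \<in> S"
      have "fst v \<le> (\<Sum>u\<in>S. fst u)" "snd v \<le> (\<Sum>u\<in>S. snd u)"
        using v S(1) by (auto intro: member_le_sum)
      then show "v \<in> ?X" using S(2) by (cases v) (auto simp: vsum_set_def)
    qed
  qed
  show "finite (Pow ?X)" by simp
qed

lemma p_mono:
  fixes x1 x2 n :: nat
  assumes "x1 \<ge> x2" and "x2 \<ge> 1"
  shows "p n (x1 + 1, x2 - 1) \<le> p n (x1, x2)"
proof -
  define A where "A = {M. (0,0) \<notin># M \<and> vsum_mset M = (x1 + 1, x2 - 1) \<and> size M \<le> n}"
  define B where "B = {M. (0,0) \<notin># M \<and> vsum_mset M = (x1, x2) \<and> size M \<le> n}"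
  have "card A \<le> card B"
  proof (rule card_le_lin_inj[where L = FP])
    show "finite A" "finite B" unfolding A_def B_def by (rule finite_Pset)+
    show "FP (\<lambda>s. G1 s + c * G2 s) = (\<lambda>s. FP G1 s + c * FP G2 s)" for G1 G2 c by (rule FP_lin)
  next
    fix G :: "(nat \<times> nat) multiset \<Rightarrow> real" assume GA: "\<forall>s. s \<notin> A \<longrightarrow> G s = 0"
    show "\<forall>s. s \<notin> B \<longrightarrow> FP G s = 0"
    proof (intro allI impI, rule ccontr)
      fix M assume MB: "M \<notin> B" and nz0: "FP G M \<noteq> 0"
      obtain v where v: "v \<in># M" and nz: "(if 1 \<le> snd v then real (fst v + 1) * G (add_mset (rr v) (M - {#v#})) else 0) \<noteq> 0"
        using nz0 unfolding FP_def using sum_mset_nonzero by blast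
      then have s: "1 \<le> snd v" and G: "G (add_mset (rr v) (M - {#v#})) \<noteq> 0" by (auto split: if_splits)
      with GA have M'A: "add_mset (rr v) (M - {#v#}) \<in> A" by blast
      have "(0,0) \<notin># M"
      proof
        assume z: "(0,0) \<in># M"
        have "(0::nat,0::nat) \<noteq> v" using s by auto
        with z have "(0,0) \<in># M - {#v#}" by (simp add: in_diff_count)
        then show False using M'A by (auto simp: A_def)
      qed
      moreover have "size M \<le> n" using M'A v by (auto simp: A_def size_Diff_submset)
      moreover have "vsum_mset M = (x1, x2)"
        using vsum_move[OF v, of "rr v"] M'A s assms by (auto simp: A_def rr_def prod_eq_iff)
      ultimately show False using MB by (auto simp: B_def)
    qed
  next
    fix G :: "(nat \<times> nat) multiset \<Rightarrow> real" assume GA: "\<forall>s. s \<notin> A \<longrightarrow> G s = 0" and FG: "FP G = (\<lambda>_. 0)"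
    show "G = (\<lambda>_. 0)"
    proof (rule sl2_inj[where E = EP and F = FP and wt = wtP and deg = degP
          and N = "int x1 + int x2" and h = "int x1 - int x2 + 2"])
      show "EP (FP G) s - FP (EP G) s = of_int (wtP s) * G s" for G s
        using commP[of G s] by (simp add: wtP_def)
      show "EP (\<lambda>s. G1 s + c * G2 s) = (\<lambda>s. EP G1 s + c * EP G2 s)" for G1 G2 c by (rule EP_lin)
      show "FP (\<lambda>s. G1 s + c * G2 s) = (\<lambda>s. FP G1 s + c * FP G2 s)" for G1 G2 c by (rule FP_lin)
      show "\<forall>s. EP G s \<noteq> 0 \<longrightarrow> wtP s = h + 2 \<and> degP s = int x1 + int x2"
        if "\<forall>s. G s \<noteq> 0 \<longrightarrow> wtP s = h \<and> degP s = int x1 + int x2" for G h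
        using EP_supp[OF that] .
      show "wtP s \<le> int x1 + int x2" if "degP s = int x1 + int x2" for s
        using that by (simp add: wtP_def degP_def)
      show "int x1 - int x2 + 2 > 0" using assms by simp
      show "\<forall>s. G s \<noteq> 0 \<longrightarrow> wtP s = int x1 - int x2 + 2 \<and> degP s = int x1 + int x2"
      proof (intro allI impI)
        fix M assume "G M \<noteq> 0"
        then have "M \<in> A" using GA by blast
        then have "vsum_mset M = (x1 + 1, x2 - 1)" by (simp add: A_def)
        then show "wtP M = int x1 - int x2 + 2 \<and> degP M = int x1 + int x2"
          using assms by (simp add: wtP_def degP_def of_nat_diff)
      qed
      show "FP G = (\<lambda>_. 0)" by (fact FG)
    qed
  qed
  then show ?thesis by (simp add: p_def A_def B_def)
qed

lemma q_mono:
  fixes x1 x2 n :: nat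
  assumes "x1 \<ge> x2" and "x2 \<ge> 1"
  shows "q n (x1 + 1, x2 - 1) \<le> q n (x1, x2)"
proof -
  define A where "A = {S. finite S \<and> (0,0) \<notin> S \<and> vsum_set S = (x1 + 1, x2 - 1) \<and> (card S = n \<or> card S + 1 = n)}"
  define B where "B = {S. finite S \<and> (0,0) \<notin> S \<and> vsum_set S = (x1, x2) \<and> (card S = n \<or> card S + 1 = n)}"
  have "card A \<le> card B"
  proof (rule card_le_lin_inj[where L = FQ])
    show "finite A" "finite B" unfolding A_def B_def by (rule finite_Qset)+
    show "FQ (\<lambda>s. G1 s + c * G2 s) = (\<lambda>s. FQ G1 s + c * FQ G2 s)" for G1 G2 c by (rule FQ_lin)
  next
    fix G :: "(nat \<times> nat) set \<Rightarrow> real" assume GA: "\<forall>s. s \<notin> A \<longrightarrow> G s = 0"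
    show "\<forall>s. s \<notin> B \<longrightarrow> FQ G s = 0"
    proof (intro allI impI, rule ccontr)
      fix S assume SB: "S \<notin> B" and nz0: "FQ G S \<noteq> 0"
      then have fin: "finite S" unfolding FQ_def using sum.infinite by blast
      obtain v where v: "v \<in> S" and nz: "(if 1 \<le> snd v \<and> rr v \<notin> S then real (fst v + 1) * G (insert (rr v) (S - {v})) else 0) \<noteq> 0"
        using sum.not_neutral_contains_not_neutral[OF nz0[unfolded FQ_def]] by blast
      then have s: "1 \<le> snd v" "rr v \<notin> S" and G: "G (insert (rr v) (S - {v})) \<noteq> 0" by (auto split: if_splits)
      with GA have M'A: "insert (rr v) (S - {v}) \<in> A" by blast
      have "(0,0) \<notin> S"
      proof
        assume z: "(0,0) \<in> S"
        have "(0::nat,0::nat) \<noteq> v" using s by auto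
        with z have "(0,0) \<in> insert (rr v) (S - {v})" by simp
        then show False using M'A by (auto simp: A_def)
      qed
      moreover have "card (insert (rr v) (S - {v})) = card S"
      proof -
        have "card S > 0" using fin v by (auto simp: card_gt_0_iff)
        then show ?thesis using fin v s by (simp add: card_insert_if)
      qed
      moreover have "vsum_set S = (x1, x2)"
        using vsum_set_move[OF fin v, of "rr v"] M'A s assms by (auto simp: A_def rr_def prod_eq_iff)
      ultimately show False using SB M'A fin by (auto simp: A_def B_def)
    qed
  next
    fix G :: "(nat \<times> nat) set \<Rightarrow> real" assume GA: "\<forall>s. s \<notin> A \<longrightarrow> G s = 0" and FG: "FQ G = (\<lambda>_. 0)"
    show "G = (\<lambda>_. 0)"
    proof (rule sl2_inj[where E = EQ and F = FQ and wt = wtQ and deg = degQ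
          and N = "int x1 + int x2" and h = "int x1 - int x2 + 2"])
      show "EQ (FQ G) s - FQ (EQ G) s = of_int (wtQ s) * G s" for G s
        using commQ[of G s] by (simp add: wtQ_def)
      show "EQ (\<lambda>s. G1 s + c * G2 s) = (\<lambda>s. EQ G1 s + c * EQ G2 s)" for G1 G2 c by (rule EQ_lin)
      show "FQ (\<lambda>s. G1 s + c * G2 s) = (\<lambda>s. FQ G1 s + c * FQ G2 s)" for G1 G2 c by (rule FQ_lin)
      show "\<forall>s. EQ G s \<noteq> 0 \<longrightarrow> wtQ s = h + 2 \<and> degQ s = int x1 + int x2"
        if "\<forall>s. G s \<noteq> 0 \<longrightarrow> wtQ s = h \<and> degQ s = int x1 + int x2" for G h
        using EQ_supp[OF that] .
      show "wtQ s \<le> int x1 + int x2" if "degQ s = int x1 + int x2" for s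
        using that by (simp add: wtQ_def degQ_def)
      show "int x1 - int x2 + 2 > 0" using assms by simp
      show "\<forall>s. G s \<noteq> 0 \<longrightarrow> wtQ s = int x1 - int x2 + 2 \<and> degQ s = int x1 + int x2"
      proof (intro allI impI)
        fix M assume "G M \<noteq> 0"
        then have "M \<in> A" using GA by blast
        then have "vsum_set M = (x1 + 1, x2 - 1)" by (simp add: A_def)
        then show "wtQ M = int x1 - int x2 + 2 \<and> degQ M = int x1 + int x2"
          using assms by (simp add: wtQ_def degQ_def of_nat_diff)
      qed
      show "FQ G = (\<lambda>_. 0)" by (fact FG)
    qed
  qed
  then show ?thesis by (simp add: q_def A_def B_def)
qed


theorem corollary6:
  fixes x1 x2 n :: nat
  assumes "x1 \<ge> x2" and "x2 \<ge> 1"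
  shows "p n (x1, x2) \<ge> p n (x1 + 1, x2 - 1) \<and> q n (x1, x2) \<ge> q n (x1 + 1, x2 - 1)"
  using p_mono[OF assms] q_mono[OF assms] by simp


end
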